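(* Let $S$ be an isolated invariant set with isolating neighborhood $N$ (so $S=\operatorname{Inv} N$). For any neighborhood $V$ of $S$ in $N$ there is an $\varepsilon>0$ with $C_\varepsilon(N,S)\subset V$.
   Context: Let $X$ be a locally compact metric space with metric $d$, $U\subset X$ open and $f:U\to X$ continuous. A solution through $x$ is a map $\sigma:\mathbb Z\to U$ with $\sigma(0)=x$ and $f(\sigma(n))=\sigma(n+1)$ for all $n$; for $N\subset U$, $\operatorname{Inv} N$ is the set of $x\in N$ admitting a solution through $x$ with all values in $N$. A compact $N\subset U$ is an isolating neighborhood if $\operatorname{Inv} N\subset\operatorname{Int} N$; $S$ is an isolated invariant set if $S=\operatorname{Inv} N$ for some isolating neighborhood $N$. For $\varepsilon>0$, a sequence $\{x_n\}_{n=q}^p$ is an $\varepsilon$-chain if $d(f(x_n),x_{n+1})<\varepsilon$ for $n=q,\dots,p-1$. The $\varepsilon$-chain neighborhood $C_\varepsilon(N,S)$ is the set of all $x\in N$ such that for some $k\ge0$ there is an $\varepsilon$-chain $\{x_n\}_{n=-k}^k\subset N$ with $x_0=x$ and $x_k,x_{-k}\in S$. *)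

theory Defs
  imports "HOL-Analysis.Analysis"
begin

definition is_solution :: "('a \<Rightarrow> 'a) \<Rightarrow> 'a set \<Rightarrow> (int \<Rightarrow> 'a) \<Rightarrow> 'a \<Rightarrow> bool" where
  "is_solution f U \<sigma> x \<longleftrightarrow> \<sigma> 0 = x \<and> (\<forall>n. \<sigma> n \<in> U) \<and> (\<forall>n. f (\<sigma> n) = \<sigma> (n + 1))"

definition Inv :: "('a \<Rightarrow> 'a) \<Rightarrow> 'a set \<Rightarrow> 'a set" where
  "Inv f N = {x \<in> N. \<exists>\<sigma>. is_solution f N \<sigma> x}"

definition isolating_neighborhood :: "('a::topological_space \<Rightarrow> 'a) \<Rightarrow> 'a set \<Rightarrow> 'a set \<Rightarrow> bool" where
  "isolating_neighborhood f U N \<longleftrightarrow> compact N \<and> N \<subseteq> U \<and> Inv f N \<subseteq> interior N"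

definition eps_chain :: "('a::metric_space \<Rightarrow> 'a) \<Rightarrow> real \<Rightarrow> (int \<Rightarrow> 'a) \<Rightarrow> int \<Rightarrow> int \<Rightarrow> bool" where
  "eps_chain f \<epsilon> xs q p \<longleftrightarrow> (\<forall>n. q \<le> n \<and> n < p \<longrightarrow> dist (f (xs n)) (xs (n + 1)) < \<epsilon>)"

definition chain_nbhd :: "('a::metric_space \<Rightarrow> 'a) \<Rightarrow> real \<Rightarrow> 'a set \<Rightarrow> 'a set \<Rightarrow> 'a set" where
  "chain_nbhd f \<epsilon> N S = {x \<in> N. \<exists>k::nat. \<exists>xs. eps_chain f \<epsilon> xs (- int k) (int k)
       \<and> (\<forall>n. - int k \<le> n \<and> n \<le> int k \<longrightarrow> xs n \<in> N)
       \<and> xs 0 = x \<and> xs (int k) \<in> S \<and> xs (- int k) \<in> S}"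

end

theory Submission
  imports Defs "HOL-Library.Diagonal_Subsequence" "HOL-Library.Nat_Bijection"
begin

lemma limit_orbit:
  fixes f :: "'a::metric_space \<Rightarrow> 'a" and ys :: "nat \<Rightarrow> int \<Rightarrow> 'a"
  assumes N: "compact N" and fc: "continuous_on N f"
    and inN: "\<And>m n. ys m n \<in> N"
    and ch: "\<And>m n. dist (f (ys m n)) (ys m (n+1)) < 1/(real m+1)"
  shows "\<exists>y r. strict_mono r \<and> (\<forall>n. (\<lambda>i. ys (r i) n) \<longlonglongrightarrow> y n) \<and> (\<forall>n. y n \<in> N)
     \<and> (\<forall>n. f (y n) = y (n+1))"
proof -
  define P where "P = (\<lambda>k (s::nat\<Rightarrow>nat). \<exists>l. (\<lambda>i. ys (s i) (int_decode k)) \<longlonglongrightarrow> l)"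
  interpret subseqs P
  proof
    fix k and s :: "nat \<Rightarrow> nat" assume "strict_mono s"
    have "\<forall>i. ys (s i) (int_decode k) \<in> N" using inN by auto
    then obtain l r where "strict_mono r" "((\<lambda>i. ys (s i) (int_decode k)) \<circ> r) \<longlonglongrightarrow> l"
      using N unfolding compact_def by meson
    then show "\<exists>r'. strict_mono r' \<and> P k (s \<circ> r')"
      unfolding P_def by (auto simp: o_def)
  qed
  have conv: "\<exists>l. (\<lambda>i. ys (diagseq i) n) \<longlonglongrightarrow> l" for n
  proof -
    have "P (int_encode n) (diagseq \<circ> ((+) (Suc (int_encode n))))"
      proof (rule diagseq_holds)
      fix r s :: "nat \<Rightarrow> nat" and k assume r: "strict_mono r" and "P k s"
      then obtain l where "(\<lambda>i. ys (s i) (int_decode k)) \<longlonglongrightarrow> l" unfolding P_def by blast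
      from LIMSEQ_subseq_LIMSEQ[OF this r] show "P k (s \<circ> r)" unfolding P_def by (auto simp: o_def)
    qed
    then obtain l where "(\<lambda>i. ys (diagseq (i + Suc (int_encode n))) n) \<longlonglongrightarrow> l"
      unfolding P_def by (auto simp: o_def add.commute)
    then show ?thesis using LIMSEQ_offset[of "\<lambda>i. ys (diagseq i) n"] by blast
  qed
  then obtain y where y: "\<And>n. (\<lambda>i. ys (diagseq i) n) \<longlonglongrightarrow> y n" by metis
  have cl: "closed N" using N compact_imp_closed by blast
  have yN: "y n \<in> N" for n
    using closed_sequentially[OF cl, of "\<lambda>i. ys (diagseq i) n"] y inN by blast
  have fy: "f (y n) = y (n+1)" for n
  proof -
    have t1: "(\<lambda>i. f (ys (diagseq i) n)) \<longlonglongrightarrow> f (y n)"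
      using continuous_on_tendsto_compose[OF fc y yN] inN by auto
    have t2: "(\<lambda>i. dist (f (ys (diagseq i) n)) (ys (diagseq i) (n+1))) \<longlonglongrightarrow> dist (f (y n)) (y (n+1))"
      by (intro tendsto_dist t1 y)
    have t3: "(\<lambda>i. 1 / (real (diagseq i) + 1)) \<longlonglongrightarrow> 0"
    proof -
      have "(\<lambda>m. 1 / (real m + 1)) \<longlonglongrightarrow> 0"
        using LIMSEQ_inverse_real_of_nat by (simp add: inverse_eq_divide add.commute)
      then show ?thesis using LIMSEQ_subseq_LIMSEQ[OF _ subseq_diagseq] by (auto simp: o_def)
    qed
    have "dist (f (y n)) (y (n+1)) \<le> 0"
      by (rule tendsto_le[OF _ t3 t2]) (auto intro!: always_eventually less_imp_le ch)
    then show ?thesis by simp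
  qed
  show ?thesis using subseq_diagseq y yN fy by blast
qed


lemma extend_chain:
  fixes f :: "'a::metric_space \<Rightarrow> 'a"
  assumes ch: "eps_chain f e xs (- int k) (int k)"
    and inN: "\<forall>n. - int k \<le> n \<and> n \<le> int k \<longrightarrow> xs n \<in> N"
    and a1: "xs (int k) \<in> Inv f N" and a2: "xs (- int k) \<in> Inv f N" and e: "e > 0"
  shows "\<exists>zs::int \<Rightarrow> 'a. zs 0 = xs 0 \<and> (\<forall>n. zs n \<in> N) \<and> (\<forall>n. dist (f (zs n)) (zs (n+1)) < e)"
proof -
  obtain s1 :: "int \<Rightarrow> 'a" where s1': "s1 0 = xs (int k)" "\<forall>n. s1 n \<in> N" "\<forall>n. f (s1 n) = s1 (n+1)"
    using a1 unfolding Inv_def is_solution_def mem_Collect_eq by blast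
  have s1: "s1 0 = xs (int k)" "\<And>n. s1 n \<in> N" "\<And>n. f (s1 n) = s1 (n+1)"
    using s1' by auto
  obtain s2 :: "int \<Rightarrow> 'a" where s2': "s2 0 = xs (- int k)" "\<forall>n. s2 n \<in> N" "\<forall>n. f (s2 n) = s2 (n+1)"
    using a2 unfolding Inv_def is_solution_def mem_Collect_eq by blast
  have s2: "s2 0 = xs (- int k)" "\<And>n. s2 n \<in> N" "\<And>n. f (s2 n) = s2 (n+1)"
    using s2' by auto
  define zs where "zs n = (if n > int k then s1 (n - int k) else if n < - int k then s2 (n + int k) else xs n)" for n
  have "zs 0 = xs 0" by (simp add: zs_def)
  moreover have "zs n \<in> N" for n
    using s1 s2 inN by (auto simp: zs_def)
  moreover have "dist (f (zs n)) (zs (n+1)) < e" for n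
  proof -
    consider "n \<ge> int k" | "n < - int k" | "- int k \<le> n" "n < int k" by linarith
    then show ?thesis
    proof cases
      case 1
      then have "f (zs n) = zs (n+1)"
      proof (cases "n = int k")
        case True then show ?thesis using s1(1) s1(3)[of 0] by (simp add: zs_def)
      next
        case False then show ?thesis using 1 s1(3)[of "n - int k"] by (simp add: zs_def algebra_simps)
      qed
      then show ?thesis using e by simp
    next
      case 2
      then have "f (zs n) = zs (n+1)"
      proof (cases "n + 1 = - int k")
        case True
        then have h: "n + int k = -1" by linarith
        have h2: "xs (n+1) = xs (- int k)" using True by simp
        show ?thesis using 2 True h h2 s2(1) s2(3)[of "-1"] by (simp add: zs_def)
      next
        case False then show ?thesis using 2 s2(3)[of "n + int k"] by (simp add: zs_def algebra_simps)
      qed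
      then show ?thesis using e by simp
    next
      case 3
      then show ?thesis using ch unfolding eps_chain_def by (simp add: zs_def)
    qed
  qed
  ultimately show ?thesis by blast
qed

theorem mainTheorem9:
  fixes f :: "'a::metric_space \<Rightarrow> 'a" and U N S V :: "'a set"
  assumes "locally_compact_space (euclidean :: 'a topology)"
    and "open U"
    and "continuous_on U f"
    and "isolating_neighborhood f U N"
    and "S = Inv f N"
    and "V \<subseteq> N"
    and "\<exists>W. open W \<and> S \<subseteq> W \<and> W \<inter> N \<subseteq> V"
  shows "\<exists>\<epsilon>>0. chain_nbhd f \<epsilon> N S \<subseteq> V"
proof (rule ccontr)
  assume na: "\<not> ?thesis"
  obtain W where W: "open W" "S \<subseteq> W" "W \<inter> N \<subseteq> V" using assms(7) by blast
  have N: "compact N" "N \<subseteq> U" using assms(4) unfolding isolating_neighborhood_def by auto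
  have fc: "continuous_on N f" using assms(3) N(2) continuous_on_subset by blast
  have ex: "\<exists>zs::int \<Rightarrow> 'a. zs 0 \<in> N - W \<and> (\<forall>n. zs n \<in> N) \<and> (\<forall>n. dist (f (zs n)) (zs (n+1)) < 1/(real m+1))" for m
  proof -
    have ep: "1/(real m+1) > 0" by simp
    then obtain x where x: "x \<in> chain_nbhd f (1/(real m+1)) N S" "x \<notin> V" using na by blast
    then obtain k xs where k: "eps_chain f (1/(real m+1)) xs (- int k) (int k)"
       "\<forall>n. - int k \<le> n \<and> n \<le> int k \<longrightarrow> xs n \<in> N"
       "xs 0 = x" "xs (int k) \<in> S" "xs (- int k) \<in> S" "x \<in> N"
      unfolding chain_nbhd_def by blast
    have "x \<notin> W" using x(2) k(6) W(3) by blast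
    obtain zs :: "int \<Rightarrow> 'a" where zs: "zs 0 = xs 0" "\<forall>n. zs n \<in> N" "\<forall>n. dist (f (zs n)) (zs (n+1)) < 1/(real m+1)"
      using extend_chain[OF k(1,2) _ _ ep] k(4,5) assms(5) by blast
    show ?thesis using zs k(3,6) \<open>x \<notin> W\<close> by (intro exI[of _ zs]) auto
  qed
  then have "\<exists>ys::nat \<Rightarrow> int \<Rightarrow> 'a. \<forall>m. ys m 0 \<in> N - W \<and> (\<forall>n. ys m n \<in> N) \<and> (\<forall>n. dist (f (ys m n)) (ys m (n+1)) < 1/(real m+1))"
    using ex by (intro choice allI) blast
  then obtain ys :: "nat \<Rightarrow> int \<Rightarrow> 'a" where ys: "\<And>m. ys m 0 \<in> N - W" "\<And>m n. ys m n \<in> N"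
     "\<And>m n. dist (f (ys m n)) (ys m (n+1)) < 1/(real m+1)" by blast
  obtain y r where yr: "strict_mono r" "\<And>n. (\<lambda>i. ys (r i) n) \<longlonglongrightarrow> y n" "\<And>n. y n \<in> N"
     "\<And>n. f (y n) = y (n+1)"
    using limit_orbit[of N f ys, OF N(1) fc ys(2) ys(3)] by blast
  have "closed (N - W)" using compact_imp_closed[OF N(1)] W(1) by (rule closed_Diff)
  then have "y 0 \<in> N - W"
    using closed_sequentially[of "N - W" "\<lambda>i. ys (r i) 0"] yr(2) ys(1) by blast
  moreover have "y 0 \<in> Inv f N"
    unfolding Inv_def is_solution_def using yr(3,4) by blast
  ultimately show False using W(2) assms(5) by blast
qed

end
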